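(* Let $\mathscr H$ be a Hilbert module over $A=M_d(\mathbb C)$. There exist vectors $g,h\in\mathscr H$ with $[g,h]=I$ if and only if the modular dimension of $\mathscr H$ is at least $d$.
   Context: A Hilbert module over $A=M_d(\mathbb C)$ is a left $A$-module $\mathscr H$ with a map $[\cdot,\cdot]:\mathscr H\times\mathscr H\to A$ such that for all $f,g,h\in\mathscr H$, $a\in A$: $[f+g,h]=[f,h]+[g,h]$; $[af,g]=a[f,g]$; $[g,f]=[f,g]^*$; $[f,f]\ge0$, and $[f,f]=0$ iff $f=0$; and $\mathscr H$ is complete in the norm $f\mapsto\|[f,f]\|^{1/2}$. A family $\{f_\alpha\}\subset\mathscr H$ is modular orthonormal if $[f_\alpha,f_\beta]=0$ for $\alpha\ne\beta$ and each $[f_\alpha,f_\alpha]$ is a minimal (rank-one) projection in $A$. A modular base is a maximal modular orthonormal family; all modular bases of $\mathscr H$ have the same cardinality, called the modular dimension of $\mathscr H$. $I$ denotes the $d\times d$ identity matrix. *)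

theory Defs
  imports "HOL-Analysis.Analysis"
begin

text \<open>The C*-algebra A = M_d(C) is modelled as complex^'d^'d with 'd a finite type, d = CARD('d).\<close>

definition adjm :: "complex^'d^'d \<Rightarrow> complex^'d^'d" where
  "adjm A = (\<chi> i j. cnj (A $ j $ i))"

definition psd :: "complex^'d::finite^'d \<Rightarrow> bool" where
  "psd A \<longleftrightarrow> (\<forall>v::complex^'d. (\<Sum>i\<in>UNIV. cnj (v $ i) * (A *v v) $ i) \<in> \<real>
                                   \<and> 0 \<le> Re (\<Sum>i\<in>UNIV. cnj (v $ i) * (A *v v) $ i))"

definition mnorm :: "complex^'d::finite^'d \<Rightarrow> real" where
  "mnorm A = onorm (\<lambda>v::complex^'d. A *v v)"

definition projection :: "complex^'d::finite^'d \<Rightarrow> bool" where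
  "projection P \<longleftrightarrow> P ** P = P \<and> adjm P = P"

definition minimal_projection :: "complex^'d::finite^'d \<Rightarrow> bool" where
  "minimal_projection P \<longleftrightarrow> projection P \<and> P \<noteq> 0 \<and>
     (\<forall>Q. projection Q \<and> P ** Q = Q \<longrightarrow> Q = 0 \<or> Q = P)"

definition hnorm :: "('h \<Rightarrow> 'h \<Rightarrow> complex^'d::finite^'d) \<Rightarrow> 'h \<Rightarrow> real" where
  "hnorm ip f = sqrt (mnorm (ip f f))"

definition hilbert_module ::
  "(complex^'d::finite^'d \<Rightarrow> 'h::ab_group_add \<Rightarrow> 'h) \<Rightarrow> ('h \<Rightarrow> 'h \<Rightarrow> complex^'d^'d) \<Rightarrow> bool" where
  "hilbert_module act ip \<longleftrightarrow>
     \<comment> \<open>left A-module\<close>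
     (\<forall>a f g. act a (f + g) = act a f + act a g) \<and>
     (\<forall>a b f. act (a + b) f = act a f + act b f) \<and>
     (\<forall>a b f. act (a ** b) f = act a (act b f)) \<and>
     (\<forall>f. act (mat 1) f = f) \<and>
     \<comment> \<open>A-valued inner product\<close>
     (\<forall>f g h. ip (f + g) h = ip f h + ip g h) \<and>
     (\<forall>a f g. ip (act a f) g = a ** ip f g) \<and>
     (\<forall>f g. ip g f = adjm (ip f g)) \<and>
     (\<forall>f. psd (ip f f)) \<and>
     (\<forall>f. ip f f = 0 \<longleftrightarrow> f = 0) \<and>
     \<comment> \<open>completeness\<close>
     (\<forall>s::nat \<Rightarrow> 'h.
        (\<forall>e>0. \<exists>N. \<forall>m\<ge>N. \<forall>n\<ge>N. hnorm ip (s m - s n) < e) \<longrightarrow>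
        (\<exists>l. \<forall>e>0. \<exists>N. \<forall>n\<ge>N. hnorm ip (s n - l) < e))"

definition modular_orthonormal :: "('h \<Rightarrow> 'h \<Rightarrow> complex^'d::finite^'d) \<Rightarrow> 'h set \<Rightarrow> bool" where
  "modular_orthonormal ip F \<longleftrightarrow>
     (\<forall>f\<in>F. \<forall>g\<in>F. f \<noteq> g \<longrightarrow> ip f g = 0) \<and> (\<forall>f\<in>F. minimal_projection (ip f f))"

definition modular_base :: "('h \<Rightarrow> 'h \<Rightarrow> complex^'d::finite^'d) \<Rightarrow> 'h set \<Rightarrow> bool" where
  "modular_base ip B \<longleftrightarrow> modular_orthonormal ip B \<and>
     (\<forall>F. modular_orthonormal ip F \<and> B \<subseteq> F \<longrightarrow> F = B)"

definition ecard :: "'a set \<Rightarrow> enat" where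
  "ecard S = (if finite S then enat (card S) else \<infinity>)"

text \<open>Modular dimension: cardinality of a modular base (all have the same cardinality).\<close>
definition modular_dim :: "('h \<Rightarrow> 'h \<Rightarrow> complex^'d::finite^'d) \<Rightarrow> enat" where
  "modular_dim ip = ecard (SOME B. modular_base ip B)"

end

theory Submission
  imports Defs
begin


definition ci :: "complex^'d::finite \<Rightarrow> complex^'d \<Rightarrow> complex" where
  "ci x y = (\<Sum>i\<in>UNIV. cnj (x$i) * y$i)"

definition outer :: "complex^'d::finite \<Rightarrow> complex^'d \<Rightarrow> complex^'d^'d" where
  "outer x y = (\<chi> i j. x$i * cnj (y$j))"

lemma adjm_nth: "adjm A $ i $ j = cnj (A $ j $ i)" by (simp add: adjm_def)

lemma adjm_adjm[simp]: "adjm (adjm A) = A" by (simp add: adjm_def vec_eq_iff)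

lemma adjm_mult: "adjm (A ** B) = adjm B ** adjm A"
  by (simp add: adjm_def vec_eq_iff matrix_matrix_mult_def mult.commute)

lemma adjm_add: "adjm (A + B) = adjm A + adjm B"
  by (simp add: adjm_def vec_eq_iff)

lemma adjm_zero[simp]: "adjm 0 = 0"
  by (simp add: adjm_def vec_eq_iff)

lemma adjm_mat1[simp]: "adjm (mat 1) = mat 1"
  by (simp add: adjm_def vec_eq_iff mat_def)

lemma adjm_outer: "adjm (outer x y) = outer y x"
  by (simp add: adjm_def outer_def vec_eq_iff mult.commute)

lemma outer_mult_outer: "outer x y ** outer u v = outer (ci y u *s x) v"
  by (simp add: outer_def ci_def vec_eq_iff matrix_matrix_mult_def sum_distrib_left sum_distrib_right mult_ac)

lemma mult_outer: "M ** outer x y = outer (M *v x) y"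
  by (simp add: outer_def vec_eq_iff matrix_matrix_mult_def matrix_vector_mult_def sum_distrib_right sum_distrib_left mult_ac)

lemma outer_mult: "outer x y ** M = outer x (adjm M *v y)"
  by (simp add: outer_def adjm_def vec_eq_iff matrix_matrix_mult_def matrix_vector_mult_def sum_distrib_left mult_ac)

lemma outer_mv: "outer x y *v z = ci y z *s x"
  by (simp add: outer_def ci_def vec_eq_iff matrix_vector_mult_def sum_distrib_left sum_distrib_right mult_ac)

lemma ci_adjm: "ci x (M *v y) = ci (adjm M *v x) y"
proof -
  have "ci x (M *v y) = (\<Sum>i\<in>UNIV. \<Sum>j\<in>UNIV. cnj (x$i) * M$i$j * y$j)"
    by (simp add: ci_def matrix_vector_mult_def sum_distrib_left mult_ac)
  also have "\<dots> = (\<Sum>j\<in>UNIV. \<Sum>i\<in>UNIV. cnj (x$i) * M$i$j * y$j)" by (rule sum.swap)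
  also have "\<dots> = ci (adjm M *v x) y"
    by (simp add: ci_def adjm_def matrix_vector_mult_def sum_distrib_right sum_distrib_left mult_ac)
  finally show ?thesis .
qed

lemma ci_cnj: "ci y x = cnj (ci x y)"
  by (simp add: ci_def mult.commute)

lemma ci_add_left: "ci (x + y) z = ci x z + ci y z"
  by (simp add: ci_def sum.distrib ring_distribs)
lemma ci_add_right: "ci z (x + y) = ci z x + ci z y"
  by (simp add: ci_def sum.distrib ring_distribs)
lemma ci_scale_left: "ci (c *s x) z = cnj c * ci x z"
  by (simp add: ci_def sum_distrib_left mult_ac)
lemma ci_scale_right: "ci z (c *s x) = c * ci z x"
  by (simp add: ci_def sum_distrib_left mult_ac)

lemma ci_self: "ci x x = of_real (\<Sum>i\<in>UNIV. (cmod (x$i))^2)"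
  unfolding ci_def of_real_sum
  by (rule sum.cong) (simp_all add: complex_mult_cnj cmod_power2 mult.commute)

lemma ci_self_zero: "ci x x = 0 \<Longrightarrow> x = 0"
proof -
  assume "ci x x = 0"
  hence "(\<Sum>i\<in>UNIV. (cmod (x$i))^2) = 0" unfolding ci_self of_real_eq_0_iff .
  hence "\<forall>i\<in>UNIV. (cmod (x$i))^2 = 0" by (subst sum_nonneg_eq_0_iff[symmetric]) auto
  thus "x = 0" by (intro vec_eq_iff[THEN iffD2]) simp
qed

lemma sum_outer_axis: "(\<Sum>i\<in>UNIV. outer (axis i 1) (axis i (1::complex))) = (mat 1 :: complex^'d::finite^'d)"
proof -
  have "(\<Sum>i\<in>UNIV. outer (axis i 1) (axis i (1::complex))) $ j $ k = (mat 1 :: complex^'d^'d) $ j $ k" for j k :: 'd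
  proof -
    have e: "\<And>i. outer (axis i 1) (axis i (1::complex)) $ j $ k = (if i = j then (if j = k then 1 else 0) else 0)"
      by (simp add: outer_def axis_def)
    have "(\<Sum>i\<in>UNIV. outer (axis i 1) (axis i (1::complex))) $ j $ k = (\<Sum>i\<in>UNIV. outer (axis i 1) (axis i (1::complex)) $ j $ k)"
      by (simp only: sum_component)
    also have "\<dots> = (if j = k then 1 else 0)" unfolding e by simp
    also have "\<dots> = (mat 1 :: complex^'d^'d) $ j $ k" by (simp only: mat_def vec_lambda_beta)
    finally show ?thesis .
  qed
  thus ?thesis unfolding vec_eq_iff by blast
qed

lemma ci_axis: "ci (axis i 1) x = x $ i"
proof -
  have "\<And>k. cnj (axis i 1 $ k) * x$k = (if k = i then x$i else 0)" by (simp add: axis_def)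
  thus ?thesis by (simp add: ci_def)
qed

lemma mv_scale: "(M::complex^'n^'m) *v (c *s x) = c *s (M *v x)"
  unfolding vec_eq_iff matrix_vector_mult_def
  by (auto simp: sum_distrib_left intro!: sum.cong)

lemma mv_add: "(M::complex^'n^'m) *v (x + y) = M *v x + M *v y"
  by (simp add: vec_eq_iff matrix_vector_mult_def sum.distrib ring_distribs)

lemma mv_axis: "(M *v axis j 1) $ i = M $ i $ j"
proof -
  have "\<And>k. M$i$k * axis j 1 $ k = (if k = j then M$i$j else 0)" by (simp add: axis_def)
  thus ?thesis by (simp add: matrix_vector_mult_def)
qed

lemma scale_cancel: "c *s u = d *s u \<Longrightarrow> u \<noteq> (0::complex^'d::finite) \<Longrightarrow> c = d"
proof -
  assume a: "c *s u = d *s u" and u: "u \<noteq> 0"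
  then obtain i where "u $ i \<noteq> 0" by (auto simp: vec_eq_iff)
  moreover have "c * u$i = d * u$i" using a by (metis vector_smult_component)
  ultimately show "c = d" by simp
qed

lemma ci_zero_left[simp]: "ci 0 x = 0" by (simp add: ci_def)
lemma ci_zero_right[simp]: "ci x 0 = 0" by (simp add: ci_def)
lemma outer_zero_right[simp]: "outer x 0 = 0" by (simp add: outer_def vec_eq_iff)
lemma outer_zero_left[simp]: "outer 0 x = 0" by (simp add: outer_def vec_eq_iff)

lemma outer_projection: "ci u u = 1 \<Longrightarrow> projection (outer u u)"
  by (simp add: projection_def outer_mult_outer adjm_outer)

lemma outer_unit_ne0: "ci u u = 1 \<Longrightarrow> outer u u \<noteq> 0"
proof
  assume a: "ci u u = 1" "outer u u = 0"
  have "outer u u *v u = u" using a(1) by (simp add: outer_mv)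
  with a have "u = 0" by simp
  with a show False by simp
qed

lemma minimal_outer:
  assumes u: "ci u u = 1"
  shows "minimal_projection (outer u u)"
  unfolding minimal_projection_def
proof (intro conjI allI impI)
  show "projection (outer u u)" using u by (rule outer_projection)
  show "outer u u \<noteq> 0" using u by (rule outer_unit_ne0)
  fix Q assume "projection Q \<and> outer u u ** Q = Q"
  hence QQ: "Q ** Q = Q" and Qa: "adjm Q = Q" and PQ: "outer u u ** Q = Q"
    by (auto simp: projection_def)
  define v where "v = Q *v u"
  have Qv: "Q = outer u v" using PQ by (simp add: outer_mult Qa v_def)
  have u0: "u \<noteq> 0" using u by auto
  define c where "c = ci v u"
  have vc: "v = c *s u"
  proof -
    have "Q *v u = c *s u" unfolding Qv by (simp add: outer_mv c_def)
    thus ?thesis by (simp add: v_def)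
  qed
  have "outer (c *s u) v = outer u v" using QQ unfolding Qv outer_mult_outer c_def by simp
  hence "outer (c *s u) v *v u = outer u v *v u" by simp
  hence "c *s (c *s u) = c *s u" by (simp add: outer_mv c_def)
  hence "(c * c) *s u = c *s u" by (simp add: vector_smult_assoc)
  hence "c * c = c" using u0 by (rule scale_cancel)
  hence "c = 0 \<or> c = 1" by (metis mult_cancel_right1 mult_zero_left)
  thus "Q = 0 \<or> Q = outer u u"
  proof
    assume "c = 0" thus ?thesis using Qv vc by simp
  next
    assume "c = 1" thus ?thesis using Qv vc by simp
  qed
qed

lemma minimal_rank1:
  assumes P: "minimal_projection P"
  shows "\<exists>u. ci u u = 1 \<and> P = outer u u"
proof -
  have PP: "P ** P = P" and Pa: "adjm P = P" and P0: "P \<noteq> 0"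
    and mn: "\<And>Q. projection Q \<Longrightarrow> P ** Q = Q \<Longrightarrow> Q = 0 \<or> Q = P"
    using P by (auto simp: minimal_projection_def projection_def)
  obtain i j where "P $ i $ j \<noteq> 0" using P0 by (auto simp: vec_eq_iff)
  define p where "p = P *v axis j 1"
  have p0: "p \<noteq> 0" using \<open>P $ i $ j \<noteq> 0\<close> by (auto simp: p_def vec_eq_iff mv_axis)
  have Pp: "P *v p = p" by (simp add: p_def matrix_vector_mul_assoc PP)
  define r where "r = (\<Sum>i\<in>UNIV. (cmod (p$i))^2)"
  have cpr: "ci p p = of_real r" by (simp add: ci_self r_def)
  have "r \<ge> 0" by (simp add: r_def sum_nonneg)
  moreover have "r \<noteq> 0" using cpr p0 ci_self_zero by force
  ultimately have r0: "r > 0" by simp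
  define u where "u = complex_of_real (1 / sqrt r) *s p"
  have sq: "(complex_of_real (sqrt r))^2 = of_real r" using r0 by (simp flip: of_real_power)
  have uu: "ci u u = 1"
    using r0 sq by (simp add: u_def ci_scale_left ci_scale_right cpr power2_eq_square[symmetric] real_sqrt_pow2 flip: of_real_mult)
  have Pu: "P *v u = u" by (simp add: u_def mv_scale Pp)
  have "P ** outer u u = outer u u" by (simp add: mult_outer Pu)
  hence "outer u u = 0 \<or> outer u u = P" using mn[OF outer_projection[OF uu]] by simp
  thus ?thesis using outer_unit_ne0[OF uu] uu by auto
qed


lemma sum_mv: "(sum M S) *v (x::complex^'d::finite) = (\<Sum>i\<in>S. M i *v x)"
  by (induct S rule: infinite_finite_induct) (simp_all add: matrix_vector_mult_add_rdistrib)

lemma psd_ci: "psd Q \<Longrightarrow> ci v (Q *v v) \<in> \<real> \<and> 0 \<le> Re (ci v (Q *v v))"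
  by (simp add: psd_def ci_def)

lemma psd_unit:
  assumes Q: "psd Q" and Q0: "Q \<noteq> 0"
  shows "\<exists>w. ci w (Q *v w) = 1"
proof -
  have "\<exists>w. ci w (Q *v w) \<noteq> 0"
  proof (rule ccontr)
    assume "\<not> ?thesis"
    hence z: "\<And>w. ci w (Q *v w) = 0" by auto
    have b: "ci x (Q *v y) = 0" for x y
    proof -
      have 1: "ci (x+y) (Q *v (x+y)) = ci x (Q *v x) + ci x (Q *v y) + ci y (Q *v x) + ci y (Q *v y)"
        by (simp add: mv_add ci_add_left ci_add_right)
      have 2: "ci (x + \<i> *s y) (Q *v (x + \<i> *s y)) = ci x (Q *v x) + \<i> * ci x (Q *v y) - \<i> * ci y (Q *v x) + ci y (Q *v y)"
        by (simp add: mv_add mv_scale ci_add_left ci_add_right ci_scale_left ci_scale_right algebra_simps)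
      from 1 2 z have e1: "ci x (Q *v y) + ci y (Q *v x) = 0" and e2: "\<i> * ci x (Q *v y) - \<i> * ci y (Q *v x) = 0"
        by simp_all
      have "\<i> * (ci x (Q *v y) - ci y (Q *v x)) = 0" using e2 by (simp add: right_diff_distrib)
      hence "ci x (Q *v y) = ci y (Q *v x)" by simp
      with e1 show ?thesis by simp
    qed
    have "Q = 0"
    proof -
      have "Q $ i $ j = 0" for i j
        using b[of "axis i 1" "axis j 1"] by (simp add: ci_axis mv_axis)
      thus ?thesis by (simp add: vec_eq_iff)
    qed
    with Q0 show False by simp
  qed
  then obtain w where w: "ci w (Q *v w) \<noteq> 0" by blast
  define c where "c = ci w (Q *v w)"
  have "c \<in> \<real>" "0 \<le> Re c" using psd_ci[OF Q] by (auto simp: c_def)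
  then obtain l where l: "c = of_real l" "l \<ge> 0" by (metis Reals_cases Re_complex_of_real)
  have l0: "l > 0" using l w c_def by (metis less_eq_real_def of_real_0)
  define w' where "w' = complex_of_real (1 / sqrt l) *s w"
  have sq: "(complex_of_real (sqrt l))^2 = of_real l" using l0 by (simp flip: of_real_power)
  have "ci w' (Q *v w') = 1"
    using l0 sq l by (simp add: w'_def mv_scale ci_scale_left ci_scale_right c_def[symmetric] power2_eq_square[symmetric])
  thus ?thesis by blast
qed



context
  fixes act :: "complex^'d::finite^'d \<Rightarrow> 'h::ab_group_add \<Rightarrow> 'h"
    and ip :: "'h \<Rightarrow> 'h \<Rightarrow> complex^'d^'d"
  assumes H: "hilbert_module act ip"
begin

lemma ip_add_l: "ip (f + g) h = ip f h + ip g h" using H[unfolded hilbert_module_def, THEN conjunct2, THEN conjunct2, THEN conjunct2, THEN conjunct2, THEN conjunct1] by blast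
lemma ip_act_l: "ip (act a f) g = a ** ip f g" using H[unfolded hilbert_module_def, THEN conjunct2, THEN conjunct2, THEN conjunct2, THEN conjunct2, THEN conjunct2, THEN conjunct1] by blast
lemma ip_sym: "ip g f = adjm (ip f g)" using H[unfolded hilbert_module_def, THEN conjunct2, THEN conjunct2, THEN conjunct2, THEN conjunct2, THEN conjunct2, THEN conjunct2, THEN conjunct1] by blast
lemma ip_psd: "psd (ip f f)" using H[unfolded hilbert_module_def, THEN conjunct2, THEN conjunct2, THEN conjunct2, THEN conjunct2, THEN conjunct2, THEN conjunct2, THEN conjunct2, THEN conjunct1] by blast
lemma ip_zero_iff: "ip f f = 0 \<longleftrightarrow> f = 0" using H[unfolded hilbert_module_def, THEN conjunct2, THEN conjunct2, THEN conjunct2, THEN conjunct2, THEN conjunct2, THEN conjunct2, THEN conjunct2, THEN conjunct2, THEN conjunct1] by blast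
lemma act_add: "act a (f + g) = act a f + act a g" using H[unfolded hilbert_module_def, THEN conjunct1] by blast

lemma ip_add_r: "ip h (f + g) = ip h f + ip h g"
  by (metis ip_sym ip_add_l adjm_add)

lemma ip_act_r: "ip f (act a g) = ip f g ** adjm a"
  by (metis ip_sym ip_act_l adjm_mult)

lemma ip_zero_l[simp]: "ip 0 g = 0"
  using ip_add_l[of 0 0 g] by simp

lemma ip_zero_r[simp]: "ip g 0 = 0"
  using ip_add_r[of g 0 0] by simp

lemma ip_diff_l: "ip (f - g) h = ip f h - ip g h"
  using ip_add_l[of "f - g" g h] by (simp add: algebra_simps)

lemma ip_diff_r: "ip h (f - g) = ip h f - ip h g"
  using ip_add_r[of h "f - g" g] by (simp add: algebra_simps)

lemma ip_sum_l: "ip (sum F S) g = (\<Sum>x\<in>S. ip (F x) g)"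
  by (induct S rule: infinite_finite_induct) (simp_all add: ip_add_l)

lemma ip_sum_r: "ip g (sum F S) = (\<Sum>x\<in>S. ip g (F x))"
  by (induct S rule: infinite_finite_induct) (simp_all add: ip_add_r)

lemma act_zero[simp]: "act a 0 = 0"
  using act_add[of a 0 0] by simp

lemma proj_fix:
  assumes P: "projection (ip f f)"
  shows "act (ip f f) f = f"
proof -
  define P where "P = ip f f"
  have PP: "P ** P = P" and Pa: "adjm P = P" using P by (auto simp: P_def projection_def)
  define y where "y = f - act P f"
  have "ip y y = 0"
    by (simp add: y_def ip_diff_l ip_diff_r ip_act_l ip_act_r P_def[symmetric] matrix_mul_assoc Pa PP)
  hence "y = 0" using ip_zero_iff by blast
  thus ?thesis by (simp add: y_def P_def)
qed

lemma proj_r: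
  assumes P: "projection (ip f f)"
  shows "ip x f = ip x f ** ip f f"
proof -
  have "ip x f = ip x (act (ip f f) f)" using proj_fix[OF P] by simp
  also have "\<dots> = ip x f ** ip f f" using P by (simp add: ip_act_r projection_def)
  finally show ?thesis .
qed


lemma mult_sum: "(A::complex^'d^'d) ** sum F S = (\<Sum>j\<in>S. A ** F j)"
  by (induct S rule: infinite_finite_induct) (simp_all add: matrix_add_ldistrib)

lemma expand:
  assumes B: "modular_base ip B" and fin: "finite B"
  shows "x = (\<Sum>f\<in>B. act (ip x f) f)"
proof (rule ccontr)
  assume ne: "x \<noteq> (\<Sum>f\<in>B. act (ip x f) f)"
  have ON: "modular_orthonormal ip B" and mx: "\<And>F. modular_orthonormal ip F \<Longrightarrow> B \<subseteq> F \<Longrightarrow> F = B"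
    using B by (auto simp: modular_base_def)
  have orth: "\<And>f g. f \<in> B \<Longrightarrow> g \<in> B \<Longrightarrow> f \<noteq> g \<Longrightarrow> ip f g = 0"
    and minp: "\<And>f. f \<in> B \<Longrightarrow> minimal_projection (ip f f)"
    using ON by (auto simp: modular_orthonormal_def)
  define y where "y = x - (\<Sum>f\<in>B. act (ip x f) f)"
  have y0: "y \<noteq> 0" using ne by (simp add: y_def)
  have yB: "ip y f = 0" if f: "f \<in> B" for f
  proof -
    have 1: "ip y f = ip x f - (\<Sum>f'\<in>B. ip x f' ** ip f' f)"
      by (simp only: y_def ip_diff_l ip_sum_l ip_act_l)
    have "(\<Sum>f'\<in>B. ip x f' ** ip f' f) = (\<Sum>f'\<in>B. if f' = f then ip x f ** ip f f else 0)"
    proof (rule sum.cong[OF refl])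
      fix f' assume "f' \<in> B"
      thus "ip x f' ** ip f' f = (if f' = f then ip x f ** ip f f else 0)"
        using orth[of f' f] f by (cases "f' = f") simp_all
    qed
    also have "\<dots> = ip x f ** ip f f" using fin f by simp
    also have "\<dots> = ip x f" using proj_r[of f x] minp[OF f] by (simp add: minimal_projection_def)
    finally show ?thesis using 1 by simp
  qed
  define Q where "Q = ip y y"
  have Q0: "Q \<noteq> 0" unfolding Q_def using y0 by (simp add: ip_zero_iff)
  have Qa: "adjm Q = Q" unfolding Q_def by (rule ip_sym[symmetric])
  obtain w where w: "ci w (Q *v w) = 1" using psd_unit[OF ip_psd[of y] Q0[unfolded Q_def]] unfolding Q_def by blast
  define e where "e = axis (undefined::'d) (1::complex)"
  have ee: "ci e e = 1" by (simp add: e_def ci_axis)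
  define z where "z = act (outer e w) y"
  have "ip z z = outer e w ** Q ** outer w e"
    by (simp add: z_def ip_act_l ip_act_r adjm_outer Q_def matrix_mul_assoc)
  also have "outer e w ** Q = outer e (Q *v w)" by (simp add: outer_mult Qa)
  also have "outer e (Q *v w) ** outer w e = outer e e"
    by (simp add: outer_mult_outer ci_cnj[of "Q *v w" w] w)
  finally have zz: "ip z z = outer e e" .
  have zf: "ip z f = 0" if "f \<in> B" for f using yB[OF that] by (simp add: z_def ip_act_l)
  have fz: "ip f z = 0" if "f \<in> B" for f using zf[OF that] ip_sym[of f z] by simp
  have zB: "z \<notin> B"
  proof
    assume "z \<in> B"
    hence "ip z z = 0" by (rule zf)
    with zz outer_unit_ne0[OF ee] show False by simp
  qed
  have "modular_orthonormal ip (insert z B)"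
    unfolding modular_orthonormal_def
    using orth minp zf fz zz minimal_outer[OF ee] by auto
  hence "insert z B = B" using mx by blast
  with zB show False by blast
qed

lemma dir2:
  assumes B: "modular_base ip B" and gh: "ip g h = mat 1"
  shows "enat CARD('d) \<le> ecard B"
proof (cases "finite B")
  case False thus ?thesis by (simp add: ecard_def)
next
  case fin: True
  have ON: "modular_orthonormal ip B" using B by (auto simp: modular_base_def)
  have minp: "\<And>f. f \<in> B \<Longrightarrow> minimal_projection (ip f f)"
    using ON by (auto simp: modular_orthonormal_def)
  have "\<forall>f\<in>B. \<exists>u. ci u u = 1 \<and> ip f f = outer u u" using minp minimal_rank1 by blast
  then obtain U where U: "\<And>f. f \<in> B \<Longrightarrow> ci (U f) (U f) = 1 \<and> ip f f = outer (U f) (U f)"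
    by metis
  define X where "X f = ip g f *v U f" for f
  define Y where "Y f = ip h f *v U f" for f
  have "mat 1 = ip g (\<Sum>f\<in>B. act (ip h f) f)" using gh expand[OF B fin, of h] by simp
  also have "\<dots> = (\<Sum>f\<in>B. ip g f ** adjm (ip h f))" by (simp add: ip_sum_r ip_act_r)
  also have "\<dots> = (\<Sum>f\<in>B. outer (X f) (Y f))"
  proof (rule sum.cong)
    fix f assume f: "f \<in> B"
    have "ip g f = ip g f ** outer (U f) (U f)"
      using proj_r[of f g] minp[OF f] U[OF f] by (simp add: minimal_projection_def)
    also have "\<dots> = outer (X f) (U f)" by (simp add: mult_outer X_def)
    finally have "ip g f ** adjm (ip h f) = outer (X f) (U f) ** adjm (ip h f)" by simp
    also have "\<dots> = outer (X f) (Y f)" by (simp add: outer_mult Y_def)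
    finally show "ip g f ** adjm (ip h f) = outer (X f) (Y f)" .
  qed simp
  finally have I: "mat 1 = (\<Sum>f\<in>B. outer (X f) (Y f))" .
  have "cart_basis \<subseteq> vec.span (X ` B)"
  proof
    fix v assume "v \<in> (cart_basis :: (complex^'d) set)"
    then obtain k where v: "v = axis k 1" by (auto simp: cart_basis_def)
    have "v = mat 1 *v v" by simp
    also have "\<dots> = (\<Sum>f\<in>B. ci (Y f) v *s X f)" by (subst I) (simp add: sum_mv outer_mv)
    finally have "v = (\<Sum>f\<in>B. ci (Y f) v *s X f)" .
    also have "\<dots> \<in> vec.span (X ` B)"
      by (intro vec.span_sum vec.span_scale vec.span_base) auto
    finally show "v \<in> vec.span (X ` B)" .
  qed
  from vec.independent_span_bound[OF finite_imageI[OF fin] independent_cart_basis this]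
  have "card (cart_basis :: (complex^'d) set) \<le> card (X ` B)" by simp
  also have "\<dots> \<le> card B" using fin by (rule card_image_le)
  finally have "CARD('d) \<le> card B" by (simp add: card_cart_basis)
  thus ?thesis using fin by (simp add: ecard_def)
qed

lemma dir1:
  assumes B: "modular_base ip B" and c: "enat CARD('d) \<le> ecard B"
  shows "\<exists>g h. ip g h = mat 1"
proof -
  have ON: "modular_orthonormal ip B" using B by (auto simp: modular_base_def)
  have orth: "\<And>f g. f \<in> B \<Longrightarrow> g \<in> B \<Longrightarrow> f \<noteq> g \<Longrightarrow> ip f g = 0"
    and minp: "\<And>f. f \<in> B \<Longrightarrow> minimal_projection (ip f f)"
    using ON by (auto simp: modular_orthonormal_def)
  have "\<exists>B'. finite B' \<and> CARD('d) \<le> card B' \<and> B' \<subseteq> B"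
  proof (cases "finite B")
    case True thus ?thesis using c by (auto simp: ecard_def)
  next
    case False thus ?thesis using infinite_arbitrarily_large[OF False, of "CARD('d)"] by auto
  qed
  then obtain B' where B': "finite B'" "CARD('d) \<le> card B'" "B' \<subseteq> B" by blast
  obtain \<phi> :: "'d \<Rightarrow> 'h" where phi: "\<phi> ` UNIV \<subseteq> B'" "inj_on \<phi> UNIV"
    using card_le_inj[of "UNIV::'d set" B'] B' by auto
  have phiB: "\<phi> i \<in> B" for i using phi B' by auto
  have "\<forall>i. \<exists>u. ci u u = 1 \<and> ip (\<phi> i) (\<phi> i) = outer u u" using minp[OF phiB] minimal_rank1 by blast
  then obtain U where U: "\<And>i. ci (U i) (U i) = 1" "\<And>i. ip (\<phi> i) (\<phi> i) = outer (U i) (U i)"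
    by metis
  define a where "a i = outer (axis i 1) (U i)" for i
  define g where "g = (\<Sum>i\<in>UNIV. act (a i) (\<phi> i))"
  have "ip g g = (\<Sum>i\<in>UNIV. \<Sum>j\<in>UNIV. a i ** (ip (\<phi> i) (\<phi> j) ** adjm (a j)))"
  proof -
    have 1: "ip g g = (\<Sum>i\<in>UNIV. a i ** ip (\<phi> i) g)"
      by (subst (1) g_def) (simp only: ip_sum_l ip_act_l)
    have 2: "ip (\<phi> i) g = (\<Sum>j\<in>UNIV. ip (\<phi> i) (\<phi> j) ** adjm (a j))" for i
      by (simp only: g_def ip_sum_r ip_act_r)
    show ?thesis unfolding 1 2 mult_sum ..
  qed
  also have "\<dots> = (\<Sum>i\<in>UNIV. outer (axis i 1) (axis i 1))"
  proof (rule sum.cong)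
    fix i
    have "(\<Sum>j\<in>UNIV. a i ** (ip (\<phi> i) (\<phi> j) ** adjm (a j))) =
          (\<Sum>j\<in>UNIV. if j = i then a i ** (ip (\<phi> i) (\<phi> i) ** adjm (a i)) else 0)"
      by (rule sum.cong) (auto simp: orth phiB phi(2) inj_eq)
    also have "\<dots> = a i ** (ip (\<phi> i) (\<phi> i) ** adjm (a i))" by simp
    also have "\<dots> = outer (axis i 1) (axis i 1)"
      by (simp add: a_def U adjm_outer outer_mult_outer)
    finally show "(\<Sum>j\<in>UNIV. a i ** (ip (\<phi> i) (\<phi> j) ** adjm (a j))) = outer (axis i 1) (axis i 1)" .
  qed simp
  also have "\<dots> = mat 1" by (rule sum_outer_axis)
  finally show ?thesis by blast
qed

end

lemma base_exists: "\<exists>B. modular_base ip B"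
proof -
  let ?A = "{F. modular_orthonormal ip F}"
  have "\<forall>C\<in>chains ?A. \<Union>C \<in> ?A"
  proof
    fix C assume C: "C \<in> chains ?A"
    show "\<Union>C \<in> ?A" unfolding modular_orthonormal_def mem_Collect_eq
    proof (intro conjI ballI impI)
      fix f g assume f: "f \<in> \<Union>C" and g: "g \<in> \<Union>C" and fg: "f \<noteq> g"
      then obtain X Y where XY: "X \<in> C" "Y \<in> C" "f \<in> X" "g \<in> Y" by blast
      from C XY have "X \<subseteq> Y \<or> Y \<subseteq> X" by (auto simp: chains_def chain_subset_def)
      moreover have "modular_orthonormal ip X" "modular_orthonormal ip Y" using C XY by (auto simp: chains_def)
      ultimately show "ip f g = 0" using XY fg unfolding modular_orthonormal_def by blast
    next
      fix f assume "f \<in> \<Union>C"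
      then obtain X where "X \<in> C" "f \<in> X" by blast
      moreover have "modular_orthonormal ip X" using C \<open>X \<in> C\<close> by (auto simp: chains_def)
      ultimately show "minimal_projection (ip f f)" unfolding modular_orthonormal_def by blast
    qed
  qed
  from Zorn_Lemma[OF this] obtain M where "M \<in> ?A" "\<forall>X\<in>?A. M \<subseteq> X \<longrightarrow> X = M" by blast
  thus ?thesis unfolding modular_base_def by blast
qed


theorem mainTheorem7:
  fixes act :: "complex^'d::finite^'d \<Rightarrow> 'h::ab_group_add \<Rightarrow> 'h"
    and ip :: "'h \<Rightarrow> 'h \<Rightarrow> complex^'d^'d"
  assumes "hilbert_module act ip"
  shows "(\<exists>g h. ip g h = mat 1) \<longleftrightarrow> enat CARD('d) \<le> modular_dim ip"
proof -
  have B: "modular_base ip (SOME B. modular_base ip B)"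
    using base_exists[of ip] by (rule someI_ex)
  show ?thesis
    unfolding modular_dim_def
    using dir1[OF assms B] dir2[OF assms B] by blast
qed

end
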